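(* For every integer $m\ge0$ and all $x,u\in O$: (1) $D_{q^m-1}(x+u)=\sum_{e+f=q^m-1}(-1)^eD_e(x)D_f(u)$; (2) $D_{q^m-1}(x-u)=\sum_{e+f=q^m-1}D_e(x)D_f(u)$; (3) $D'_{q^m-1}(x+u)=\sum_{e+f=q^m-1}(-1)^eD_e(x)D'_f(u)$; (4) $D'_{q^m-1}(x-u)=\sum_{e+f=q^m-1}D_e(x)D'_f(u)$, where the sums run over pairs of nonnegative integers $(e,f)$.
   Context: Let $q$ be a prime power, $O=\mathbf{F}_q[[T]]$. Hasse derivatives: $\mathcal{D}_n(\sum_ia_iT^i)=\sum_i\binom{i}{n}a_iT^{i-n}$ (binomials in $\mathbf{F}_q$). For $j\ge0$ with base-$q$ expansion $j=\alpha_0+\alpha_1q+\cdots+\alpha_sq^s$ ($0\le\alpha_i<q$): $D_j(x)=\prod_{n=0}^s\mathcal{D}_n(x)^{\alpha_n}$ ($D_0=1$), and $D'_j(x)=\prod_{n=0}^sD'_{\alpha_nq^n}(x)$ where $D'_{\alpha q^n}(x)=\mathcal{D}_n(x)^\alpha$ if $0\le\alpha<q-1$ and $D'_{(q-1)q^n}(x)=\mathcal{D}_n(x)^{q-1}-1$. *)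

theory Defs
  imports "HOL-Computational_Algebra.Formal_Power_Series" "HOL-Library.Cardinality"
begin

text \<open>O = F_q[[T]] is modelled as 'a fps for a finite field 'a, q = CARD('a).\<close>

definition hasse :: "nat \<Rightarrow> 'a::comm_ring_1 fps \<Rightarrow> 'a fps" where
  "hasse n f = Abs_fps (\<lambda>i. of_nat ((i + n) choose n) * fps_nth f (i + n))"

definition digit :: "nat \<Rightarrow> nat \<Rightarrow> nat \<Rightarrow> nat" where
  "digit q n j = j div q ^ n mod q"

text \<open>D_j(x) = prod_n (Hasse_n x)^(alpha_n); all digits with n > j vanish (q >= 2).\<close>
definition Dfun :: "nat \<Rightarrow> nat \<Rightarrow> 'a::comm_ring_1 fps \<Rightarrow> 'a fps" where
  "Dfun q j x = (\<Prod>n\<le>j. hasse n x ^ digit q n j)"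

definition Dpfun :: "nat \<Rightarrow> nat \<Rightarrow> 'a::comm_ring_1 fps \<Rightarrow> 'a fps" where
  "Dpfun q j x = (\<Prod>n\<le>j. (if digit q n j = q - 1 then hasse n x ^ (q - 1) - 1
                            else hasse n x ^ digit q n j))"

end

theory Submission
  imports Defs "HOL-Computational_Algebra.Polynomial"
begin


lemma card_ge2: "CARD('a::{finite,field}) \<ge> 2"
proof -
  have "{0::'a, 1} \<subseteq> UNIV" by simp
  hence "card {0::'a,1} \<le> CARD('a)" by (intro card_mono) auto
  thus ?thesis by simp
qed

lemma pow_card_same: "(x::'a::{finite,field}) ^ CARD('a) = x"
proof (cases "x = 0")
  case False
  have "x * (\<Prod>y\<in>UNIV-{0}. x * y) = x * x ^ (card (UNIV :: 'a set) - 1) * \<Prod>(UNIV-{0})"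
    by (simp add: prod.distrib mult_ac)
  also have "x * x ^ (card (UNIV :: 'a set) - 1) = x ^ Suc (card (UNIV :: 'a set) - 1)"
    by (subst power_Suc) auto
  also have "Suc (card (UNIV :: 'a set) - 1) = card (UNIV :: 'a set)"
    using finite_UNIV_card_ge_0[where ?'a = 'a] by simp
  also have "(\<Prod>y\<in>UNIV-{0}. x * y) = (\<Prod>y\<in>UNIV-{0}. y)"
    by (rule prod.reindex_bij_witness[of _ "\<lambda>y. y / x" "\<lambda>y. x * y"]) (use False in auto)
  finally show ?thesis
    by simp
qed (use finite_UNIV_card_ge_0[where ?'a = 'a] in auto)

lemma binom_card_zero:
  assumes "0 < i" "i < CARD('a::{finite,field})"
  shows "(of_nat (CARD('a) choose i) :: 'a) = 0"
proof -
  define q where "q = CARD('a)"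
  define P :: "'a poly" where "P = (\<Sum>k\<in>{1..<q}. monom (of_nat (q choose k)) k)"
  have ev: "poly P t = 0" for t
  proof -
    have "(t + 1) ^ q = (\<Sum>k\<le>q. of_nat (q choose k) * t ^ k * 1 ^ (q - k))"
      by (rule binomial_ring)
    also have "{..q} = insert 0 (insert q {1..<q})" using card_ge2[where 'a='a] unfolding q_def by auto
    also have "(\<Sum>k\<in>insert 0 (insert q {1..<q}). of_nat (q choose k) * t ^ k * 1 ^ (q - k))
       = 1 + (t ^ q + (\<Sum>k\<in>{1..<q}. of_nat (q choose k) * t ^ k))"
      using card_ge2[where 'a='a] unfolding q_def by (subst sum.insert; simp)+
    finally have "(t + 1) ^ q = 1 + (t ^ q + poly P t)"
      by (simp add: P_def poly_sum poly_monom)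
    moreover have "(t+1)^q = t + 1" "t ^ q = t" unfolding q_def by (rule pow_card_same)+
    ultimately show ?thesis by simp
  qed
  have deg: "degree P < q"
  proof -
    have "degree P \<le> q - 1"
    proof (rule degree_le, intro allI impI)
      fix j assume "q - 1 < j"
      thus "coeff P j = 0" by (simp add: P_def coeff_sum)
    qed
    thus ?thesis using card_ge2[where 'a='a] unfolding q_def by linarith
  qed
  have "P = 0"
    by (rule poly_eqI_degree[where A=UNIV]) (use ev deg in \<open>auto simp: q_def\<close>)
  hence "coeff P i = 0" by simp
  moreover have "coeff P i = of_nat (q choose i)"
    using assms unfolding P_def q_def by (simp add: coeff_sum)
  ultimately show ?thesis unfolding q_def by simp
qed

lemma binom_cardm1:
  assumes "i \<le> CARD('a::{finite,field}) - 1"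
  shows "(of_nat ((CARD('a) - 1) choose i) :: 'a) = (-1) ^ i"
  using assms
proof (induction i)
  case 0 then show ?case by simp
next
  case (Suc i)
  have q: "Suc (CARD('a) - 1) = CARD('a)" using card_ge2[where 'a='a] by simp
  have "(of_nat (CARD('a) choose Suc i) :: 'a) = 0"
    using Suc.prems card_ge2[where 'a='a] by (intro binom_card_zero) auto
  hence "(of_nat ((CARD('a) - 1) choose i) :: 'a) + of_nat ((CARD('a) - 1) choose Suc i) = 0"
    by (metis q binomial_Suc_Suc of_nat_add)
  with Suc show ?case by (simp add: eq_neg_iff_add_eq_0[symmetric])
qed

lemma neg_one_card: "(-1::'a::{finite,field}) ^ CARD('a) = -1"
  by (rule pow_card_same)

lemma neg_one_cardm1: "(-1::'a::{finite,field} fps) ^ (CARD('a) - 1) = 1"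
proof -
  have "(-1::'a fps) ^ CARD('a) = fps_const ((-1::'a) ^ CARD('a))"
    by (metis fps_const_power fps_const_neg fps_const_1_eq_1)
  also have "\<dots> = -1" by (metis neg_one_card fps_const_neg fps_const_1_eq_1)
  finally have h: "(-1::'a fps) ^ CARD('a) = -1" .
  have "CARD('a) = Suc (CARD('a) - 1)" using card_ge2[where 'a='a] by simp
  then have "(-1::'a fps) ^ CARD('a) = - ((-1::'a fps) ^ (CARD('a) - 1))"
    by (metis power_Suc mult_minus1)
  with h show ?thesis by simp
qed

lemma K1:
  fixes a b :: "'a::{finite,field} fps"
  shows "(a+b)^(CARD('a)-1) = (\<Sum>i<CARD('a). (-1)^i * a^i * b^(CARD('a)-1-i))"
proof -
  have "(a+b)^(CARD('a)-1) = (\<Sum>i\<le>CARD('a)-1. of_nat ((CARD('a)-1) choose i) * a^i * b^(CARD('a)-1-i))"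
    by (rule binomial_ring)
  also have "{..CARD('a)-1} = {..<CARD('a)}" using card_ge2[where 'a='a] by auto
  also have "(\<Sum>i<CARD('a). of_nat ((CARD('a)-1) choose i) * a^i * b^(CARD('a)-1-i))
     = (\<Sum>i<CARD('a). (-1)^i * a^i * b^(CARD('a)-1-i))"
  proof (rule sum.cong[OF refl])
    fix i assume "i \<in> {..<CARD('a)}"
    hence "(of_nat ((CARD('a) - 1) choose i) :: 'a) = (-1) ^ i" by (intro binom_cardm1) auto
    hence "(of_nat ((CARD('a) - 1) choose i) :: 'a fps) = (-1) ^ i"
      by (metis fps_of_nat fps_const_power fps_const_neg fps_const_1_eq_1)
    thus "of_nat ((CARD('a)-1) choose i) * a^i * b^(CARD('a)-1-i) = (-1)^i * a^i * b^(CARD('a)-1-i)"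
      by simp
  qed
  finally show ?thesis .
qed

lemma K2:
  fixes a b :: "'a::{finite,field} fps"
  shows "(a-b)^(CARD('a)-1) = (\<Sum>i<CARD('a). a^i * b^(CARD('a)-1-i))"
proof -
  have "(a-b)^(CARD('a)-1) = (a+(-b))^(CARD('a)-1)" by simp
  also have "\<dots> = (\<Sum>i<CARD('a). (-1)^i * a^i * (-b)^(CARD('a)-1-i))" by (rule K1)
  also have "\<dots> = (\<Sum>i<CARD('a). a^i * b^(CARD('a)-1-i))"
  proof (rule sum.cong[OF refl])
    fix i assume "i \<in> {..<CARD('a)}"
    hence "(-1::'a fps)^i * (-1)^(CARD('a)-1-i) = (-1)^(CARD('a)-1)"
      by (simp flip: power_add)
    also have "\<dots> = 1" by (rule neg_one_cardm1)
    finally have h: "(-1::'a fps)^i * (-1)^(CARD('a)-1-i) = 1" .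
    have pm: "(-b)^(CARD('a)-1-i) = (-1)^(CARD('a)-1-i) * b^(CARD('a)-1-i)"
      by (metis power_minus)
    have "(-1)^i * a^i * (-b)^(CARD('a)-1-i) = ((-1::'a fps)^i * (-1)^(CARD('a)-1-i)) * (a^i * b^(CARD('a)-1-i))"
      unfolding pm by (simp only: mult_ac)
    thus "(-1)^i * a^i * (-b)^(CARD('a)-1-i) = a^i * b^(CARD('a)-1-i)" by (simp only: h mult_1_left)
  qed
  finally show ?thesis .
qed

lemma K_prime:
  fixes a b s :: "'a::{finite,field} fps" and c :: "nat \<Rightarrow> 'a fps"
  assumes "s^(CARD('a)-1) = (\<Sum>i<CARD('a). c i * a^i * b^(CARD('a)-1-i))"
  and "c 0 = 1"
  shows "s^(CARD('a)-1) - 1 = (\<Sum>i<CARD('a). c i * a^i *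
     (if CARD('a)-1-i = CARD('a)-1 then b^(CARD('a)-1) - 1 else b^(CARD('a)-1-i)))"
proof -
  have "(\<Sum>i<CARD('a). c i * a^i *
     (if CARD('a)-1-i = CARD('a)-1 then b^(CARD('a)-1) - 1 else b^(CARD('a)-1-i)))
   = (\<Sum>i<CARD('a). c i * a^i * b^(CARD('a)-1-i) - (if i = 0 then 1 else 0))"
  proof (rule sum.cong[OF refl])
    fix i assume "i \<in> {..<CARD('a)}"
    hence "(CARD('a)-1-i = CARD('a)-1) = (i = 0)" by auto
    thus "c i * a^i *
     (if CARD('a)-1-i = CARD('a)-1 then b^(CARD('a)-1) - 1 else b^(CARD('a)-1-i))
      = c i * a^i * b^(CARD('a)-1-i) - (if i = 0 then 1 else 0)"
      using assms(2) by (auto simp: algebra_simps)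
  qed
  also have "\<dots> = (\<Sum>i<CARD('a). c i * a^i * b^(CARD('a)-1-i)) - (\<Sum>i<CARD('a). (if i = 0 then 1 else 0))"
    by (rule sum_subtractf)
  also have "(\<Sum>i<CARD('a). (if i = 0 then 1 else 0)) = (1::'a fps)"
    using card_ge2[where 'a='a] by (simp add: sum.delta)
  finally show ?thesis using assms(1) by simp
qed



lemma digit_low:
  assumes "e < q^m" "n < m" "q > 0"
  shows "digit q n (e + q^m * i) = digit q n e"
proof -
  have qm: "q^m * i = q^n * (q^(m-n) * i)" using assms(2)
    by (metis le_add_diff_inverse less_imp_le_nat mult.assoc power_add)
  have "(e + q^m * i) div q^n = e div q^n + q^(m-n) * i"
    unfolding qm using assms(3) by simp
  moreover have "q^(m-n) * i = q * (q^(m-n-1) * i)" using assms(2)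
    by (metis Suc_diff_Suc diff_Suc_1 mult.assoc power_Suc zero_less_diff)
  ultimately show ?thesis unfolding digit_def by simp
qed

lemma digit_top:
  assumes "e < q^m" "i < q"
  shows "digit q m (e + q^m * i) = i"
proof -
  have "q^m > 0" using assms by (cases "q = 0") auto
  hence "(e + q^m * i) div q^m = i" using assms(1) by simp
  thus ?thesis unfolding digit_def using assms(2) by simp
qed

lemma digit_big:
  assumes "e < q^m" "m \<le> n" "q > 0"
  shows "digit q n e = 0"
proof -
  have "q^m \<le> q^n" using assms by (simp add: power_increasing)
  thus ?thesis unfolding digit_def using assms by simp
qed

lemma digit_qm1:
  assumes "n < m" "q > 0"
  shows "digit q n (q^m - 1) = q - 1"
  using assms(1)
proof (induction m)
  case 0 then show ?case by simp
next
  case (Suc k)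
  have pk: "q^k > 0" using assms(2) by simp
  have eq: "q^Suc k - 1 = (q^k - 1) + q^k * (q - 1)"
  proof -
    obtain j where j: "q = Suc j" using assms(2) by (cases q) auto
    show ?thesis unfolding j using pk by (simp add: algebra_simps j)
  qed
  show ?case
  proof (cases "n < k")
    case True
    have "digit q n (q ^ k - 1 + q ^ k * (q - 1)) = digit q n (q ^ k - 1)"
      by (rule digit_low) (use True pk assms(2) in auto)
    then show ?thesis unfolding eq using Suc True by simp
  next
    case False
    hence "n = k" using Suc by simp
    have "digit q k (q ^ k - 1 + q ^ k * (q - 1)) = q - 1"
      by (rule digit_top) (use pk assms(2) in auto)
    then show ?thesis unfolding eq using \<open>n = k\<close> by simp
  qed
qed

lemma compl_split:
  fixes q e i m :: nat
  assumes "e < q^m" "i < q"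
  shows "q^Suc m - 1 - (e + q^m * i) = (q^m - 1 - e) + q^m * (q - 1 - i)"
proof -
  obtain j where "q = Suc (i + j)" using less_imp_Suc_add[OF assms(2)] by blast
  hence j: "q = i + 1 + j" by simp
  have "q^Suc m = q^m * i + q^m + q^m * j" unfolding power_Suc j by (simp add: algebra_simps)
  moreover have "q - 1 - i = j" using j by simp
  ultimately show ?thesis using assms(1) by simp
qed

lemma sum_regroup:
  fixes g :: "nat \<Rightarrow> 'r::comm_monoid_add"
  shows "(\<Sum>e<q^Suc m. g e) = (\<Sum>i<q. \<Sum>e<q^m. g (e + q^m * i))"
proof -
  have "(\<Sum>e<q^Suc m. g e) = (\<Sum>e<q * q^m. g e)" by simp
  also have "\<dots> = (\<Sum>i<q. sum g {i * q^m..<i * q^m + q^m})"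
    by (rule sum.nat_group[symmetric])
  also have "\<dots> = (\<Sum>i<q. \<Sum>e<q^m. g (e + q^m * i))"
  proof (rule sum.cong[OF refl])
    fix i
    show "sum g {i * q^m..<i * q^m + q^m} = (\<Sum>e<q^m. g (e + q^m * i))"
      by (subst sum.atLeastLessThan_shift_0) (simp add: atLeast0LessThan comp_def algebra_simps)
  qed
  finally show ?thesis .
qed

lemma G:
  fixes A B :: "nat \<Rightarrow> nat \<Rightarrow> 'r::comm_ring_1"
  assumes q: "q > 0"
  shows "(\<Prod>n<m. \<Sum>i<q. A n i * B n (q-1-i)) =
    (\<Sum>e<q^m. (\<Prod>n<m. A n (digit q n e)) * (\<Prod>n<m. B n (digit q n (q^m-1-e))))"
proof (induction m)
  case 0 then show ?case by simp
next
  case (Suc m)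
  define P where "P e = (\<Prod>n<m. A n (digit q n e))" for e
  define Q where "Q e = (\<Prod>n<m. B n (digit q n (q^m-1-e)))" for e
  have "(\<Prod>n<Suc m. \<Sum>i<q. A n i * B n (q-1-i)) =
     (\<Sum>e<q^m. P e * Q e) * (\<Sum>i<q. A m i * B m (q-1-i))"
    using Suc by (simp add: P_def Q_def)
  also have "\<dots> = (\<Sum>e<q^m. \<Sum>i<q. (P e * Q e) * (A m i * B m (q-1-i)))"
    by (rule sum_product)
  also have "\<dots> = (\<Sum>i<q. \<Sum>e<q^m. (P e * Q e) * (A m i * B m (q-1-i)))"
    by (rule sum.swap)
  also have "\<dots> = (\<Sum>i<q. \<Sum>e<q^m. (\<Prod>n<Suc m. A n (digit q n (e + q^m * i))) *
        (\<Prod>n<Suc m. B n (digit q n (q^Suc m-1-(e + q^m * i)))))"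
  proof (intro sum.cong refl)
    fix i e assume i: "i \<in> {..<q}" and e: "e \<in> {..<q^m}"
    have c: "q^Suc m-1-(e + q^m * i) = (q^m - 1 - e) + q^m * (q - 1 - i)"
      using i e by (intro compl_split) auto
    have e2: "q^m - 1 - e < q^m" using e by auto
    have "(\<Prod>n<Suc m. A n (digit q n (e + q^m * i))) = P e * A m i"
    proof -
      have "(\<Prod>n<m. A n (digit q n (e + q^m * i))) = P e"
        unfolding P_def using e q by (intro prod.cong refl) (simp add: digit_low)
      moreover have "digit q m (e + q^m * i) = i" using e i by (intro digit_top) auto
      ultimately show ?thesis by simp
    qed
    moreover have "(\<Prod>n<Suc m. B n (digit q n (q^Suc m-1-(e + q^m * i)))) = Q e * B m (q-1-i)"
    proof -
      have "(\<Prod>n<m. B n (digit q n (q^Suc m-1-(e + q^m * i)))) = Q e"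
        unfolding Q_def c using e2 q by (intro prod.cong refl) (simp add: digit_low)
      moreover have "digit q m (q^Suc m-1-(e + q^m * i)) = q - 1 - i" unfolding c
        using e2 q by (intro digit_top) auto
      ultimately show ?thesis by simp
    qed
    ultimately show "(P e * Q e) * (A m i * B m (q-1-i)) = (\<Prod>n<Suc m. A n (digit q n (e + q^m * i))) *
        (\<Prod>n<Suc m. B n (digit q n (q^Suc m-1-(e + q^m * i))))" by (simp add: ac_simps)
  qed
  also have "\<dots> = (\<Sum>e<q^Suc m. (\<Prod>n<Suc m. A n (digit q n e)) * (\<Prod>n<Suc m. B n (digit q n (q^Suc m-1-e))))"
    by (rule sum_regroup[symmetric])
  finally show ?case .
qed



lemma hasse_add: "hasse n (x + u) = hasse n x + hasse n u"
  unfolding hasse_def by (rule fps_ext) (simp add: algebra_simps)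

lemma hasse_diff: "hasse n (x - u) = hasse n x - hasse n (u :: 'a::comm_ring_1 fps)"
  unfolding hasse_def by (rule fps_ext) (simp add: algebra_simps)

lemma n_less_pow: "(q::nat) \<ge> 2 \<Longrightarrow> n < q ^ n"
proof (induction n)
  case 0 then show ?case by simp
next
  case (Suc n)
  then have "Suc n \<le> q^n" by simp
  also have "q^n < q^Suc n" using Suc.prems by simp
  finally show ?case .
qed

lemma prod_digit_reduce:
  fixes f :: "nat \<Rightarrow> nat \<Rightarrow> 'r::comm_monoid_mult"
  assumes q: "q \<ge> 2" and e: "e < q^m" and f0: "\<And>n. f n 0 = 1"
  shows "(\<Prod>n\<le>e. f n (digit q n e)) = (\<Prod>n<m. f n (digit q n e))"
proof -
  have "(\<Prod>n\<le>e. f n (digit q n e)) = (\<Prod>n\<in>{..<m+e+1}. f n (digit q n e))"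
  proof (rule prod.mono_neutral_left)
    show "\<forall>n\<in>{..<m + e + 1} - {..e}. f n (digit q n e) = 1"
    proof
      fix n assume "n \<in> {..<m + e + 1} - {..e}"
      hence "e < n" by auto
      hence "e < q^n" using n_less_pow[OF q, of n] by linarith
      hence "digit q n e = 0" using q by (intro digit_big[of e q n]) auto
      thus "f n (digit q n e) = 1" by (simp add: f0)
    qed
  qed auto
  also have "\<dots> = (\<Prod>n<m. f n (digit q n e))"
  proof (rule prod.mono_neutral_right)
    show "\<forall>n\<in>{..<m + e + 1} - {..<m}. f n (digit q n e) = 1"
    proof
      fix n assume "n \<in> {..<m + e + 1} - {..<m}"
      hence "m \<le> n" by auto
      hence "digit q n e = 0" using q e by (intro digit_big[of e q m]) auto
      thus "f n (digit q n e) = 1" by (simp add: f0)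
    qed
  qed auto
  finally show ?thesis .
qed

lemma Dfun_eq:
  assumes "q \<ge> 2" "e < q^m"
  shows "Dfun q e x = (\<Prod>n<m. hasse n x ^ digit q n e)"
  unfolding Dfun_def by (rule prod_digit_reduce[OF assms]) simp

lemma Dpfun_eq:
  assumes "q \<ge> 2" "e < q^m"
  shows "Dpfun q e x = (\<Prod>n<m. (if digit q n e = q - 1 then hasse n x ^ (q - 1) - 1
                            else hasse n x ^ digit q n e))"
  unfolding Dpfun_def by (rule prod_digit_reduce[OF assms]) (use assms(1) in auto)

lemma pow_digits:
  fixes x :: "'r::comm_monoid_mult"
  assumes xq: "x^q = x" and q: "q > 0"
  shows "e < q^m \<Longrightarrow> x^e = (\<Prod>n<m. x^(digit q n e))"
proof (induction m arbitrary: e)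
  case 0 then show ?case by simp
next
  case (Suc m)
  have pm: "q^m > 0" using q by simp
  define e' where "e' = e mod q^m"
  define i where "i = e div q^m"
  have e: "e = e' + q^m * i" unfolding e'_def i_def by simp
  have e'': "e' < q^m" unfolding e'_def using pm by simp
  have i: "i < q" unfolding i_def using Suc.prems
    by (simp add: less_mult_imp_div_less mult.commute)
  have xqm: "x^(q^k) = x" for k
    by (induction k) (simp_all add: power_mult xq)
  have "x^e = x^e' * (x^(q^m))^i" unfolding e by (simp add: power_add power_mult)
  also have "\<dots> = x^e' * x^i" by (simp add: xqm)
  also have "x^e' = (\<Prod>n<m. x^(digit q n e))"
    unfolding Suc.IH[OF e''] e using e'' q by (intro prod.cong refl) (simp add: digit_low)
  also have "i = digit q m e" unfolding e using e'' i by (simp add: digit_top)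
  finally show ?case by simp
qed

lemma assemble:
  fixes F :: "nat \<Rightarrow> 'r::comm_ring_1" and A B :: "nat \<Rightarrow> nat \<Rightarrow> 'r"
  assumes q: "q > 0" and F: "\<And>n. n < m \<Longrightarrow> F n = (\<Sum>i<q. A n i * B n (q-1-i))"
  shows "(\<Prod>n<m. F n) = (\<Sum>e\<le>q^m-1. (\<Prod>n<m. A n (digit q n e)) * (\<Prod>n<m. B n (digit q n (q^m-1-e))))"
proof -
  have "(\<Prod>n<m. F n) = (\<Prod>n<m. \<Sum>i<q. A n i * B n (q-1-i))" by (simp add: F)
  also have "\<dots> = (\<Sum>e<q^m. (\<Prod>n<m. A n (digit q n e)) * (\<Prod>n<m. B n (digit q n (q^m-1-e))))"
    by (rule G[OF q])
  also have "{..<q^m} = {..q^m-1}" using q by (metis Suc_pred' lessThan_Suc_atMost zero_less_power)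
  finally show ?thesis .
qed

theorem corollary8:
  fixes x u :: "'a::{finite,field} fps" and m :: nat
  shows "Dfun (CARD('a)) (CARD('a) ^ m - 1) (x + u) =
           (\<Sum>e\<le>CARD('a) ^ m - 1. (- 1) ^ e * Dfun (CARD('a)) e x * Dfun (CARD('a)) (CARD('a) ^ m - 1 - e) u)
       \<and> Dfun (CARD('a)) (CARD('a) ^ m - 1) (x - u) =
           (\<Sum>e\<le>CARD('a) ^ m - 1. Dfun (CARD('a)) e x * Dfun (CARD('a)) (CARD('a) ^ m - 1 - e) u)
       \<and> Dpfun (CARD('a)) (CARD('a) ^ m - 1) (x + u) =
           (\<Sum>e\<le>CARD('a) ^ m - 1. (- 1) ^ e * Dfun (CARD('a)) e x * Dpfun (CARD('a)) (CARD('a) ^ m - 1 - e) u)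
       \<and> Dpfun (CARD('a)) (CARD('a) ^ m - 1) (x - u) =
           (\<Sum>e\<le>CARD('a) ^ m - 1. Dfun (CARD('a)) e x * Dpfun (CARD('a)) (CARD('a) ^ m - 1 - e) u)"
proof -
  define q where "q = CARD('a)"
  have q2: "q \<ge> 2" unfolding q_def by (rule card_ge2)
  hence q0: "q > 0" by simp
  have qm: "q^m - 1 < q^m" using q0 by simp
  have qme: "q^m - 1 - e < q^m" if "e \<le> q^m - 1" for e using q0 that
    by (metis diff_le_self le_less_trans qm)
  have ele: "e < q^m" if "e \<le> q^m - 1" for e using that qm by linarith
  have dq: "digit q n (q^m - 1) = q - 1" if "n < m" for n using digit_qm1[OF that q0] .
  have neg1: "(-1::'a fps)^q = -1"
  proof -
    have "(-1::'a fps) ^ q = fps_const ((-1::'a) ^ q)"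
      by (metis fps_const_power fps_const_neg fps_const_1_eq_1)
    also have "\<dots> = -1" unfolding q_def by (metis neg_one_card fps_const_neg fps_const_1_eq_1)
    finally show ?thesis .
  qed
  have sign: "(-1::'a fps)^e = (\<Prod>n<m. (-1)^(digit q n e))" if "e \<le> q^m - 1" for e
    by (rule pow_digits[OF neg1 q0 ele[OF that]])
  define a where "a n = hasse n x" for n
  define b where "b n = hasse n u" for n
  define B' where "B' n j = (if j = q - 1 then b n ^ (q - 1) - 1 else b n ^ j)" for n j
  have Dx: "Dfun q e x = (\<Prod>n<m. a n ^ digit q n e)" if "e \<le> q^m - 1" for e
    unfolding a_def by (rule Dfun_eq[OF q2 ele[OF that]])
  have Du: "Dfun q (q^m - 1 - e) u = (\<Prod>n<m. b n ^ digit q n (q^m - 1 - e))" if "e \<le> q^m - 1" for e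
    unfolding b_def by (rule Dfun_eq[OF q2 qme[OF that]])
  have Dpu: "Dpfun q (q^m - 1 - e) u = (\<Prod>n<m. B' n (digit q n (q^m - 1 - e)))" if "e \<le> q^m - 1" for e
    unfolding B'_def b_def by (rule Dpfun_eq[OF q2 qme[OF that]])
  have Dtop: "Dfun q (q^m - 1) y = (\<Prod>n<m. hasse n y ^ (q - 1))" for y
    unfolding Dfun_eq[OF q2 qm] by (intro prod.cong refl) (subst dq, auto)
  have Dptop: "Dpfun q (q^m - 1) y = (\<Prod>n<m. hasse n y ^ (q - 1) - 1)" for y
    unfolding Dpfun_eq[OF q2 qm] by (intro prod.cong refl) (subst dq, auto)
  have K1': "(a n + b n)^(q-1) = (\<Sum>i<q. ((-1)^i * a n ^ i) * b n ^ (q-1-i))" for n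
    unfolding q_def by (rule K1)
  have K2': "(a n - b n)^(q-1) = (\<Sum>i<q. a n ^ i * b n ^ (q-1-i))" for n
    unfolding q_def by (rule K2)
  have K3': "(a n + b n)^(q-1) - 1 = (\<Sum>i<q. ((-1)^i * a n ^ i) * B' n (q-1-i))" for n
    unfolding B'_def q_def by (rule K_prime) (use K1'[unfolded q_def] in simp_all)
  have K4': "(a n - b n)^(q-1) - 1 = (\<Sum>i<q. a n ^ i * B' n (q-1-i))" for n
  proof -
    have "(a n - b n)^(q-1) - 1 = (\<Sum>i<q. (\<lambda>_. 1) i * a n ^ i * B' n (q-1-i))"
      unfolding B'_def q_def by (rule K_prime) (use K2'[unfolded q_def] in simp_all)
    thus ?thesis by simp
  qed
  have P1: "Dfun q (q^m - 1) (x + u) =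
           (\<Sum>e\<le>q^m - 1. (- 1) ^ e * Dfun q e x * Dfun q (q^m - 1 - e) u)"
  proof -
    have "Dfun q (q^m - 1) (x + u) = (\<Prod>n<m. (a n + b n)^(q-1))"
      unfolding Dtop a_def b_def hasse_add ..
    also have "\<dots> = (\<Sum>e\<le>q^m-1. (\<Prod>n<m. (-1)^(digit q n e) * a n ^ (digit q n e)) *
        (\<Prod>n<m. b n ^ (digit q n (q^m-1-e))))"
      by (rule assemble[OF q0 K1'])
    also have "\<dots> = (\<Sum>e\<le>q^m - 1. (- 1) ^ e * Dfun q e x * Dfun q (q^m - 1 - e) u)"
      by (rule sum.cong[OF refl]) (simp only: atMost_iff Dx Du Dpu sign prod.distrib mult_ac)
    finally show ?thesis .
  qed
  have P2: "Dfun q (q^m - 1) (x - u) =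
           (\<Sum>e\<le>q^m - 1. Dfun q e x * Dfun q (q^m - 1 - e) u)"
  proof -
    have "Dfun q (q^m - 1) (x - u) = (\<Prod>n<m. (a n - b n)^(q-1))"
      unfolding Dtop a_def b_def hasse_diff ..
    also have "\<dots> = (\<Sum>e\<le>q^m-1. (\<Prod>n<m. a n ^ (digit q n e)) *
        (\<Prod>n<m. b n ^ (digit q n (q^m-1-e))))"
      by (rule assemble[OF q0 K2'])
    also have "\<dots> = (\<Sum>e\<le>q^m - 1. Dfun q e x * Dfun q (q^m - 1 - e) u)"
      by (rule sum.cong[OF refl]) (simp only: atMost_iff Dx Du Dpu sign prod.distrib mult_ac)
    finally show ?thesis .
  qed
  have P3: "Dpfun q (q^m - 1) (x + u) =
           (\<Sum>e\<le>q^m - 1. (- 1) ^ e * Dfun q e x * Dpfun q (q^m - 1 - e) u)"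
  proof -
    have "Dpfun q (q^m - 1) (x + u) = (\<Prod>n<m. (a n + b n)^(q-1) - 1)"
      unfolding Dptop a_def b_def hasse_add ..
    also have "\<dots> = (\<Sum>e\<le>q^m-1. (\<Prod>n<m. (-1)^(digit q n e) * a n ^ (digit q n e)) *
        (\<Prod>n<m. B' n (digit q n (q^m-1-e))))"
      by (rule assemble[OF q0 K3'])
    also have "\<dots> = (\<Sum>e\<le>q^m - 1. (- 1) ^ e * Dfun q e x * Dpfun q (q^m - 1 - e) u)"
      by (rule sum.cong[OF refl]) (simp only: atMost_iff Dx Du Dpu sign prod.distrib mult_ac)
    finally show ?thesis .
  qed
  have P4: "Dpfun q (q^m - 1) (x - u) =
           (\<Sum>e\<le>q^m - 1. Dfun q e x * Dpfun q (q^m - 1 - e) u)"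
  proof -
    have "Dpfun q (q^m - 1) (x - u) = (\<Prod>n<m. (a n - b n)^(q-1) - 1)"
      unfolding Dptop a_def b_def hasse_diff ..
    also have "\<dots> = (\<Sum>e\<le>q^m-1. (\<Prod>n<m. a n ^ (digit q n e)) *
        (\<Prod>n<m. B' n (digit q n (q^m-1-e))))"
      by (rule assemble[OF q0 K4'])
    also have "\<dots> = (\<Sum>e\<le>q^m - 1. Dfun q e x * Dpfun q (q^m - 1 - e) u)"
      by (rule sum.cong[OF refl]) (simp only: atMost_iff Dx Du Dpu sign prod.distrib mult_ac)
    finally show ?thesis .
  qed
  show ?thesis using P1 P2 P3 P4 unfolding q_def by blast
qed

end
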